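(* Let $X$ be a real Banach space with $\dim X\ge 2$ and let $\alpha,\beta>0$. Then $$\alpha+\beta\le DW_B(X,\alpha,\beta)\le\max\{2\alpha+\beta,\ \alpha+2\beta\}.$$
   Context: For $x,y\in X$, $x$ is Birkhoff orthogonal to $y$, written $x\perp_B y$, if $\|x+\lambda y\|\ge\|x\|$ for all $\lambda\in\mathbb R$. For $\alpha,\beta>0$, $$DW_B(X,\alpha,\beta)=\sup\left\{\frac{\alpha\|x\|+\beta\|y\|}{\|x-y\|}\left\|\frac{x}{\|x\|}-\frac{y}{\|y\|}\right\|: x,y\in X\setminus\{0\},\ x\perp_B y\right\}.$$ *)

theory Defs
  imports "HOL-Analysis.Analysis" "HOL-Library.Extended_Real"
begin

definition birkhoff_orth :: "'a::real_normed_vector \<Rightarrow> 'a \<Rightarrow> bool" where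
  "birkhoff_orth x y \<longleftrightarrow> (\<forall>t::real. norm (x + t *\<^sub>R y) \<ge> norm x)"

text \<open>Supremum taken in the extended reals, so that an unbounded set gives infinity.\<close>
definition DW_B :: "'a::real_normed_vector itself \<Rightarrow> real \<Rightarrow> real \<Rightarrow> ereal" where
  "DW_B _ \<alpha> \<beta> = (SUP p \<in> {(x::'a, y). x \<noteq> 0 \<and> y \<noteq> 0 \<and> birkhoff_orth x y}.
      ereal ((\<alpha> * norm (fst p) + \<beta> * norm (snd p)) / norm (fst p - snd p)
        * norm (fst p /\<^sub>R norm (fst p) - snd p /\<^sub>R norm (snd p))))"

end

theory Submission imports Defs begin
lemma c1: fixes a b D N al be M :: real
  assumes "a>0" "b>0" "al>0" "be>0" "a\<ge>b" "D\<ge>a" "N*a \<le> D + (a-b)" "N\<ge>0"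
   "M \<ge> 2*al+be" "M\<ge>al+2*be"
  shows "(al*a+be*b)*N \<le> M*D"
proof -
  have k: "a*(M*a-al*a-be*b) \<ge> (al*a+be*b)*(a-b)"
  proof (cases "2*be \<le> al")
    case True
    have "be*b*b \<ge> 0" "be*a*a \<ge> 0" using assms by simp_all
    moreover have "al*a*b \<ge> 2*be*a*b" using True assms by (simp add: mult_right_mono)
    moreover have "M*a*a \<ge> (2*al+be)*a*a" using assms by (simp add: mult_right_mono)
    ultimately show ?thesis by (simp add: algebra_simps)
  next
    case False
    have "(2*be-al)*a*(a-b) \<ge> 0" using False assms by simp
    moreover have "be*b*b \<ge> 0" using assms by simp
    moreover have "M*a*a \<ge> (al+2*be)*a*a" using assms by (simp add: mult_right_mono)
    ultimately show ?thesis by (simp add: algebra_simps)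
  qed
  have co: "M*a-al*a-be*b \<ge> 0"
  proof -
    have "M*a \<ge> (2*al+be)*a" using assms by (simp add: mult_right_mono)
    moreover have "be*a \<ge> be*b" "al*a\<ge>0" using assms by simp_all
    ultimately show ?thesis by (simp add: algebra_simps)
  qed
  have "D*(M*a-al*a-be*b) \<ge> a*(M*a-al*a-be*b)" using co assms by (simp add: mult_right_mono)
  hence h: "(al*a+be*b)*(D+(a-b)) \<le> M*D*a" using k by (simp add: algebra_simps)
  have "(al*a+be*b)*(N*a) \<le> (al*a+be*b)*(D+(a-b))"
    using assms by (intro mult_left_mono) auto
  hence "((al*a+be*b)*N)*a \<le> (M*D)*a" using h by (simp add: algebra_simps)
  thus ?thesis using assms by simp
qed

lemma c2: fixes a b D N al be M :: real
  assumes "a>0" "b>0" "al>0" "be>0" "b\<ge>a" "D\<ge>a" "D \<ge> b-a" "N*b \<le> D + (b-a)" "N\<ge>0"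
   "M\<ge>al+2*be"
  shows "(al*a+be*b)*N \<le> M*D"
proof -
  have h: "(al*a+be*b)*(D+(b-a)) \<le> M*D*b"
  proof (cases "a \<ge> b-a")
    case True
    have "al*a \<le> al*b" "be*b\<ge>0" using assms by simp_all
    hence co: "(al+2*be)*b - al*a - be*b \<ge> 0" by (simp add: algebra_simps)
    have "D*((al+2*be)*b - al*a - be*b) \<ge> a*((al+2*be)*b - al*a - be*b)"
      using co assms by (simp add: mult_right_mono)
    moreover have "a*((al+2*be)*b - al*a - be*b) \<ge> (al*a+be*b)*(b-a)"
    proof -
      have "be*b*(2*a-b) \<ge> 0" using True assms by simp
      thus ?thesis by (simp add: algebra_simps)
    qed
    moreover have "M*D*b \<ge> (al+2*be)*D*b" using assms by (simp add: mult_right_mono)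
    ultimately show ?thesis by (simp add: algebra_simps)
  next
    case False
    have "al*a \<le> al*b" "be*b\<ge>0" using assms by simp_all
    hence co: "(al+2*be)*b - al*a - be*b \<ge> 0" by (simp add: algebra_simps)
    have "D*((al+2*be)*b - al*a - be*b) \<ge> (b-a)*((al+2*be)*b - al*a - be*b)"
      using co assms by (simp add: mult_right_mono)
    moreover have "(b-a)*((al+2*be)*b - al*a - be*b) \<ge> (al*a+be*b)*(b-a)"
    proof -
      have "(b-a)*(al*(b-2*a)) \<ge> 0" using False assms by simp
      thus ?thesis by (simp add: algebra_simps)
    qed
    moreover have "M*D*b \<ge> (al+2*be)*D*b" using assms by (simp add: mult_right_mono)
    ultimately show ?thesis by (simp add: algebra_simps)
  qed
  have "(al*a+be*b)*(N*b) \<le> (al*a+be*b)*(D+(b-a))"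
    using assms by (intro mult_left_mono) auto
  hence "((al*a+be*b)*N)*b \<le> (M*D)*b" using h by (simp add: algebra_simps)
  thus ?thesis using assms by simp
qed

lemma normdiff:
  fixes x y :: "'a::real_normed_vector"
  assumes "x \<noteq> 0" "y \<noteq> 0"
  shows "norm (x /\<^sub>R norm x - y /\<^sub>R norm y) * norm x \<le> norm (x-y) + \<bar>norm x - norm y\<bar>"
    "norm (x /\<^sub>R norm x - y /\<^sub>R norm y) * norm y \<le> norm (x-y) + \<bar>norm x - norm y\<bar>"
proof -
  have ax: "norm x > 0" "norm y > 0" using assms by auto
  have "norm x *\<^sub>R (x /\<^sub>R norm x - y /\<^sub>R norm y) = (x - y) + ((1 - norm x / norm y) *\<^sub>R y)"
    using ax by (simp add: algebra_simps scaleR_diff_right divide_inverse)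
  hence "norm (x /\<^sub>R norm x - y /\<^sub>R norm y) * norm x = norm ((x - y) + ((1 - norm x / norm y) *\<^sub>R y))"
    using ax by (metis abs_of_pos mult.commute norm_scaleR)
  also have "\<dots> \<le> norm (x-y) + \<bar>1 - norm x / norm y\<bar> * norm y"
    by (metis norm_scaleR norm_triangle_ineq)
  also have "\<bar>1 - norm x / norm y\<bar> * norm y = \<bar>norm x - norm y\<bar>"
    using ax by (simp add: abs_mult_pos' field_simps abs_minus_commute flip: abs_mult)
  finally show "norm (x /\<^sub>R norm x - y /\<^sub>R norm y) * norm x \<le> norm (x-y) + \<bar>norm x - norm y\<bar>" by simp
  have "norm y *\<^sub>R (x /\<^sub>R norm x - y /\<^sub>R norm y) = (norm y / norm x) *\<^sub>R x - y"
    using ax by (simp add: scaleR_diff_right divide_inverse_commute)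
  also have "\<dots> = (x - y) + ((norm y / norm x - 1) *\<^sub>R x)" by (simp add: scaleR_diff_left)
  finally have "norm y *\<^sub>R (x /\<^sub>R norm x - y /\<^sub>R norm y) = (x - y) + ((norm y / norm x - 1) *\<^sub>R x)" .
  hence "norm (x /\<^sub>R norm x - y /\<^sub>R norm y) * norm y = norm ((x - y) + ((norm y / norm x - 1) *\<^sub>R x))"
    using ax by (metis abs_of_pos mult.commute norm_scaleR)
  also have "\<dots> \<le> norm (x-y) + \<bar>norm y / norm x - 1\<bar> * norm x"
    by (metis norm_scaleR norm_triangle_ineq)
  also have "\<bar>norm y / norm x - 1\<bar> * norm x = \<bar>norm x - norm y\<bar>"
    using ax by (simp add: field_simps abs_minus_commute flip: abs_mult)
  finally show "norm (x /\<^sub>R norm x - y /\<^sub>R norm y) * norm y \<le> norm (x-y) + \<bar>norm x - norm y\<bar>" by simp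
qed

lemma upper_pt:
  fixes x y :: "'a::real_normed_vector"
  assumes "x \<noteq> 0" "y \<noteq> 0" "birkhoff_orth x y" "al>0" "be>0"
  shows "(al * norm x + be * norm y) / norm (x - y) * norm (x /\<^sub>R norm x - y /\<^sub>R norm y)
     \<le> max (2*al+be) (al+2*be)"
proof -
  let ?M = "max (2*al+be) (al+2*be)"
  let ?N = "norm (x /\<^sub>R norm x - y /\<^sub>R norm y)"
  have ax: "norm x > 0" "norm y > 0" using assms by auto
  have D1: "norm (x-y) \<ge> norm x" using assms(3) unfolding birkhoff_orth_def
    by (metis diff_conv_add_uminus scaleR_minus1_left)
  have D2: "norm (x-y) \<ge> norm y - norm x"
    by (metis norm_minus_commute norm_triangle_ineq2)
  have Dp: "norm (x-y) > 0" using D1 ax by linarith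
  have "(al * norm x + be * norm y) * ?N \<le> ?M * norm (x-y)"
  proof (cases "norm x \<ge> norm y")
    case True
    show ?thesis using normdiff[OF assms(1,2)] True ax D1 assms(4,5)
      by (intro c1) auto
  next
    case False
    show ?thesis using normdiff[OF assms(1,2)] False ax D1 D2 assms(4,5)
      by (intro c2) auto
  qed
  hence "(al * norm x + be * norm y) * ?N / norm (x-y) \<le> ?M"
    using Dp by (simp add: divide_le_eq)
  thus ?thesis by (simp add: mult.commute mult.left_commute)
qed

lemma exists_orth:
  fixes x z :: "'a::real_normed_vector"
  assumes "\<And>t. x + t *\<^sub>R z \<noteq> 0" "z \<noteq> 0"
  shows "\<exists>u. u \<noteq> 0 \<and> birkhoff_orth u z"
proof -
  define R where "R = 2 * norm x / norm z"
  have "\<exists>t\<in>{-R..R}. \<forall>s\<in>{-R..R}. norm (x + t *\<^sub>R z) \<le> norm (x + s *\<^sub>R z)"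
    apply (rule continuous_attains_inf)
    using assms by (auto simp: R_def intro!: continuous_intros)
  then obtain t where t: "t \<in> {-R..R}" "\<And>s. s\<in>{-R..R} \<Longrightarrow> norm (x + t *\<^sub>R z) \<le> norm (x + s *\<^sub>R z)"
    by blast
  have R0: "R \<ge> 0" by (simp add: R_def)
  have all: "norm (x + t *\<^sub>R z) \<le> norm (x + s *\<^sub>R z)" for s
  proof (cases "s \<in> {-R..R}")
    case True thus ?thesis using t by auto
  next
    case False
    hence "\<bar>s\<bar> > R" by auto
    hence "\<bar>s\<bar> * norm z > R * norm z" using assms(2) by simp
    hence "\<bar>s\<bar> * norm z > 2 * norm x" using assms(2) by (simp add: R_def)
    moreover have "norm (x + s *\<^sub>R z) \<ge> \<bar>s\<bar> * norm z - norm x"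
      by (metis norm_scaleR norm_triangle_ineq2 norm_minus_commute add.commute diff_add_cancel
          add_diff_cancel_left' norm_diff_ineq)
    moreover have "norm (x + t *\<^sub>R z) \<le> norm (x + 0 *\<^sub>R z)" using t(2)[of 0] R0 by auto
    ultimately show ?thesis by auto
  qed
  show ?thesis
  proof (intro exI conjI)
    show "x + t *\<^sub>R z \<noteq> 0" by (rule assms(1))
    show "birkhoff_orth (x + t *\<^sub>R z) z" unfolding birkhoff_orth_def
    proof
      fix s :: real
      show "norm (x + t *\<^sub>R z) \<le> norm (x + t *\<^sub>R z + s *\<^sub>R z)"
        using all[of "t+s"] by (simp add: scaleR_add_left add.assoc)
    qed
  qed
qed

lemma orth_scale:
  assumes "birkhoff_orth x y" "a \<noteq> 0" "b \<noteq> 0"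
  shows "birkhoff_orth (a *\<^sub>R x) (b *\<^sub>R y)"
  unfolding birkhoff_orth_def
proof
  fix t :: real
  have "norm x \<le> norm (x + (t*b/a) *\<^sub>R y)" using assms(1) unfolding birkhoff_orth_def by blast
  hence "\<bar>a\<bar> * norm x \<le> \<bar>a\<bar> * norm (x + (t*b/a) *\<^sub>R y)" by (simp add: mult_left_mono)
  also have "\<bar>a\<bar> * norm (x + (t*b/a) *\<^sub>R y) = norm (a *\<^sub>R x + t *\<^sub>R (b *\<^sub>R y))"
    using assms(2) by (simp add: scaleR_add_right flip: norm_scaleR)
  finally show "norm (a *\<^sub>R x) \<le> norm (a *\<^sub>R x + t *\<^sub>R (b *\<^sub>R y))" by simp
qed

theorem proposition3:
  fixes \<alpha> \<beta> :: real
  assumes "\<exists>S :: 'a::banach set. independent S \<and> card S = 2"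
    and "\<alpha> > 0" and "\<beta> > 0"
  shows "ereal (\<alpha> + \<beta>) \<le> DW_B TYPE('a) \<alpha> \<beta>
    \<and> DW_B TYPE('a) \<alpha> \<beta> \<le> ereal (max (2 * \<alpha> + \<beta>) (\<alpha> + 2 * \<beta>))"
proof
  show "DW_B TYPE('a) \<alpha> \<beta> \<le> ereal (max (2 * \<alpha> + \<beta>) (\<alpha> + 2 * \<beta>))"
    unfolding DW_B_def
  proof (rule SUP_least)
    fix p assume "p \<in> {(x::'a, y). x \<noteq> 0 \<and> y \<noteq> 0 \<and> birkhoff_orth x y}"
    then obtain x y where pxy: "p = (x,y)" and h: "x \<noteq> 0" "y \<noteq> 0" "birkhoff_orth x y" by blast
    note ub = upper_pt[OF h assms(2,3)]
    show "ereal ((\<alpha> * norm (fst p) + \<beta> * norm (snd p)) / norm (fst p - snd p)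
        * norm (fst p /\<^sub>R norm (fst p) - snd p /\<^sub>R norm (snd p)))
        \<le> ereal (max (2 * \<alpha> + \<beta>) (\<alpha> + 2 * \<beta>))"
      unfolding pxy fst_conv snd_conv ereal_less_eq by (rule ub)
  qed
next
  obtain S :: "'a set" where S: "independent S" "card S = 2" using assms(1) by blast
  then obtain x z where xz: "S = {x, z}" "x \<noteq> z" by (meson card_2_iff)
  have z0: "z \<noteq> 0" using S(1) xz(1) dependent_zero by blast
  have Sx: "S - {x} = {z}" using xz by auto
  have nx: "x \<notin> span {z}" using S(1) xz(1) Sx unfolding dependent_def by auto
  have "x + t *\<^sub>R z \<noteq> 0" for t
  proof
    assume "x + t *\<^sub>R z = 0"
    hence "x = (-t) *\<^sub>R z" by (simp add: eq_neg_iff_add_eq_0)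
    moreover have "(-t) *\<^sub>R z \<in> span {z}" by (intro span_scale span_base) simp
    ultimately show False using nx by simp
  qed
  then obtain u where u: "u \<noteq> 0" "birkhoff_orth u z" using exists_orth z0 by blast
  define p where "p = u /\<^sub>R norm u"
  define q where "q = z /\<^sub>R norm z"
  have pq: "norm p = 1" "norm q = 1" using u z0 by (auto simp: p_def q_def)
  have bo: "birkhoff_orth p q" unfolding p_def q_def
    using orth_scale[OF u(2)] u z0 by simp
  have "norm (p - q) \<ge> norm p" using bo unfolding birkhoff_orth_def
    by (metis diff_conv_add_uminus scaleR_minus1_left)
  hence d: "norm (p - q) \<noteq> 0" using pq by auto
  have mem: "(p, q) \<in> {(x::'a, y). x \<noteq> 0 \<and> y \<noteq> 0 \<and> birkhoff_orth x y}"
    using pq bo by auto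
  have val: "(\<alpha> * norm p + \<beta> * norm q) / norm (p - q) * norm (p /\<^sub>R norm p - q /\<^sub>R norm q) = \<alpha> + \<beta>"
    using pq d by simp
  show "ereal (\<alpha> + \<beta>) \<le> DW_B TYPE('a) \<alpha> \<beta>"
    unfolding DW_B_def
    by (rule SUP_upper2[OF mem]) (simp only: fst_conv snd_conv val order_refl ereal_less_eq)
qed
end
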